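(* For any positive integers $n$ and $p\ge2$, any (possibly randomized) one-way protocol for CHAIN$_p(n)$ (described in the context) with success probability at least $2/3$ must have communication complexity at least $n/(36p^2)$.
   Context: CHAIN$_p(n)$: there are $p$ players $P_1,\dots,P_p$. For each $i\in[p-1]$, player $P_i$ receives a bit string $x^i\in\{0,1\}^n$, and for each $i\in\{2,\dots,p\}$ player $P_i$ receives an index $t^i\in[n]$. It is promised that either $x^i_{t^{i+1}}=0$ for all $i\in[p-1]$ (the $0$-case) or $x^i_{t^{i+1}}=1$ for all $i\in[p-1]$ (the $1$-case); the goal is to decide which case holds. A one-way protocol consists of $p$ possibly randomized algorithms: player 1 computes a message $m_1$ from its input; for $i=2,\dots,p-1$ player $i$ computes $m_i$ from its input and $m_{i-1}$; player $p$ outputs a decision from its input and $m_{p-1}$. The communication complexity is the maximum length in bits of any $m_1,\dots,m_{p-1}$ over all inputs and randomness; the success probability is the probability (for every valid input) that the decision is correct. *)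

theory Defs
  imports "HOL-Probability.Probability_Mass_Function"
begin

text \<open>Players are numbered 1..p. Bit strings are bool lists of length n,
  indices are 0-based (t < n).
  - chain_first: player 1 maps x^1 to a distribution on messages m_1;
  - chain_mid i: player i (2 <= i <= p-1) maps (x^i, t^i, m_{i-1}) to a distribution on m_i;
  - chain_last: player p maps (t^p, m_{p-1}) to a distribution on the decision.\<close>

record chain_protocol =
  chain_first :: "bool list \<Rightarrow> bool list pmf"
  chain_mid   :: "nat \<Rightarrow> bool list \<Rightarrow> nat \<Rightarrow> bool list \<Rightarrow> bool list pmf"
  chain_last  :: "nat \<Rightarrow> bool list \<Rightarrow> bool pmf"

text \<open>Distribution of message m_i, for i >= 1, on input (xs, ts):
  xs i = x^i, ts i = t^i.\<close>
fun chain_msg :: "chain_protocol \<Rightarrow> (nat \<Rightarrow> bool list) \<Rightarrow> (nat \<Rightarrow> nat) \<Rightarrow> nat \<Rightarrow> bool list pmf" where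
  "chain_msg P xs ts 0 = return_pmf []"
| "chain_msg P xs ts (Suc 0) = chain_first P (xs 1)"
| "chain_msg P xs ts (Suc (Suc k)) =
     bind_pmf (chain_msg P xs ts (Suc k)) (chain_mid P (Suc (Suc k)) (xs (Suc (Suc k))) (ts (Suc (Suc k))))"

definition chain_output :: "chain_protocol \<Rightarrow> nat \<Rightarrow> (nat \<Rightarrow> bool list) \<Rightarrow> (nat \<Rightarrow> nat) \<Rightarrow> bool pmf" where
  "chain_output P p xs ts = bind_pmf (chain_msg P xs ts (p - 1)) (chain_last P (ts p))"

definition chain_input :: "nat \<Rightarrow> nat \<Rightarrow> (nat \<Rightarrow> bool list) \<Rightarrow> (nat \<Rightarrow> nat) \<Rightarrow> bool" where
  "chain_input p n xs ts \<longleftrightarrow> (\<forall>i\<in>{1..p-1}. length (xs i) = n) \<and> (\<forall>i\<in>{2..p}. ts i < n)"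

definition chain_case :: "nat \<Rightarrow> (nat \<Rightarrow> bool list) \<Rightarrow> (nat \<Rightarrow> nat) \<Rightarrow> bool \<Rightarrow> bool" where
  "chain_case p xs ts b \<longleftrightarrow> (\<forall>i\<in>{1..p-1}. xs i ! ts (i + 1) = b)"

definition chain_cost_le :: "chain_protocol \<Rightarrow> nat \<Rightarrow> nat \<Rightarrow> nat \<Rightarrow> bool" where
  "chain_cost_le P p n C \<longleftrightarrow>
     (\<forall>xs ts. chain_input p n xs ts \<longrightarrow>
        (\<forall>i\<in>{1..p-1}. \<forall>m\<in>set_pmf (chain_msg P xs ts i). length m \<le> C))"

text \<open>Success probability at least q on every valid (promise) input; the decision
  True means the 1-case.\<close>
definition chain_success :: "chain_protocol \<Rightarrow> nat \<Rightarrow> nat \<Rightarrow> real \<Rightarrow> bool" where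
  "chain_success P p n q \<longleftrightarrow>
     (\<forall>xs ts b. chain_input p n xs ts \<longrightarrow> chain_case p xs ts b \<longrightarrow>
        pmf (chain_output P p xs ts) b \<ge> q)"

end

theory Submission
  imports Defs "HOL-Probability.Hoeffding"
begin

lemma cosh_bound_nonneg:
  fixes x :: real assumes "x \<ge> 0"
  shows "exp x + exp (-x) \<le> 2 * exp (x^2/2)"
proof -
  have "-(2*x) * (1/2) + ln (1 + (1/2) * (exp (2*x) - 1)) \<le> (2*x)^2/8"
    using Hoeffdings_lemma_aux[of "2*x" "1/2"] assms by simp
  hence "ln ((1 + exp (2*x))/2) \<le> x + x^2/2"
    by (simp add: power2_eq_square field_simps)
  hence "(1 + exp (2*x))/2 \<le> exp (x + x^2/2)"
    by (metis add_pos_pos divide_pos_pos exp_gt_zero exp_le_cancel_iff exp_ln zero_less_one zero_less_numeral)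
  hence "exp (-x) * ((1 + exp (2*x))/2) \<le> exp (-x) * exp (x + x^2/2)"
    by (intro mult_left_mono) auto
  moreover have "exp (-x) * exp (2*x) = exp x" by (simp add: exp_add[symmetric])
  moreover have "exp (-x) * exp (x + x^2/2) = exp (x^2/2)" by (simp add: exp_add[symmetric])
  ultimately show ?thesis by (simp add: field_simps)
qed

lemma cosh_bound:
  fixes x :: real
  shows "exp x + exp (-x) \<le> 2 * exp (x^2/2)"
proof (cases "x \<ge> 0")
  case True thus ?thesis by (rule cosh_bound_nonneg)
next
  case False
  hence "exp (-x) + exp (-(-x)) \<le> 2 * exp ((-x)^2/2)" by (intro cosh_bound_nonneg) auto
  thus ?thesis by simp
qed

lemma lists_Suc_image:
  "{y::bool list. length y = Suc n} = (\<lambda>(b, y). b # y) ` (UNIV \<times> {y. length y = n})"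
  by (auto simp: length_Suc_conv)

lemma sum_lists_prod:
  fixes f :: "nat \<Rightarrow> bool \<Rightarrow> real"
  shows "(\<Sum>y\<in>{y::bool list. length y = n}. \<Prod>t<n. f t (y!t)) = (\<Prod>t<n. f t True + f t False)"
proof (induction n arbitrary: f)
  case 0
  have "{y::bool list. length y = 0} = {[]}" by auto
  thus ?case by simp
next
  case (Suc n)
  have inj: "inj_on (\<lambda>(b, y). b # y) (UNIV \<times> {y::bool list. length y = n})"
    by (auto simp: inj_on_def)
  have "(\<Sum>y\<in>{y::bool list. length y = Suc n}. \<Prod>t<Suc n. f t (y!t))
      = (\<Sum>z\<in>UNIV \<times> {y::bool list. length y = n}. \<Prod>t<Suc n. f t ((fst z # snd z)!t))"
    unfolding lists_Suc_image by (subst sum.reindex[OF inj]) (auto intro!: sum.cong simp: case_prod_beta)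
  also have "\<dots> = (\<Sum>b\<in>UNIV. \<Sum>y\<in>{y::bool list. length y = n}. f 0 b * (\<Prod>t<n. f (Suc t) (y!t)))"
    by (simp add: sum.cartesian_product prod.lessThan_Suc_shift case_prod_beta del: prod.lessThan_Suc)
  also have "\<dots> = (\<Sum>b\<in>UNIV. f 0 b * (\<Prod>t<n. f (Suc t) True + f (Suc t) False))"
    by (simp add: sum_distrib_left[symmetric] Suc.IH[of "\<lambda>t. f (Suc t)"])
  also have "\<dots> = (\<Prod>t<Suc n. f t True + f t False)"
    by (simp add: UNIV_bool prod.lessThan_Suc_shift algebra_simps del: prod.lessThan_Suc)
  finally show ?case .
qed

definition flip :: "nat \<Rightarrow> bool list \<Rightarrow> bool list" where
  "flip t y = y[t := \<not> y!t]"
definition chi :: "nat \<Rightarrow> bool list \<Rightarrow> real" where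
  "chi t y = (if y!t then 1 else -1)"

lemma flip_len[simp]: "length (flip t y) = length y"
  by (simp add: flip_def)
lemma flip_flip: "t < length y \<Longrightarrow> flip t (flip t y) = y"
  by (simp add: flip_def)
lemma chi_flip: "t < length y \<Longrightarrow> chi t (flip t y) = - chi t y"
  by (simp add: flip_def chi_def)

lemma sum_flip:
  assumes "t < n"
  shows "(\<Sum>y\<in>{y::bool list. length y = n}. F (flip t y)) = (\<Sum>y\<in>{y. length y = n}. F y)"
  by (rule sum.reindex_bij_witness[where i="flip t" and j="flip t"]) (use assms in \<open>auto simp: flip_flip\<close>)

lemma chi_sum0:
  assumes "t < n"
  shows "(\<Sum>y\<in>{y::bool list. length y = n}. chi t y) = 0"
proof -
  have "(\<Sum>y\<in>{y::bool list. length y = n}. chi t y) = (\<Sum>y\<in>{y::bool list. length y = n}. chi t (flip t y))"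
    using sum_flip[OF assms, of "chi t"] by simp
  also have "\<dots> = (\<Sum>y\<in>{y::bool list. length y = n}. - chi t y)"
    using assms by (intro sum.cong) (auto simp: chi_flip)
  finally show ?thesis by (simp add: sum_negf)
qed

lemma upd_same: "y ! t = b \<Longrightarrow> y[t := b] = y"
  by (metis list_update_id)

lemma upd_diff:
  fixes F :: "bool list \<Rightarrow> real"
  assumes "t < n"
  shows "(\<Sum>y\<in>{y::bool list. length y = n}. F (y[t:=True]) - F (y[t:=False]))
       = 2 * (\<Sum>y\<in>{y::bool list. length y = n}. chi t y * F y)"
proof -
  let ?Y = "{y::bool list. length y = n}"
  have pw: "F (y[t:=True]) - F (y[t:=False]) = chi t y * F y - chi t y * F (flip t y)" if "y \<in> ?Y" for y
    using that assms by (cases "y!t") (auto simp: chi_def flip_def upd_same)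
  have "(\<Sum>y\<in>?Y. chi t y * F (flip t y)) = (\<Sum>y\<in>?Y. (\<lambda>y. - chi t y * F y) (flip t y))"
    using assms by (intro sum.cong) (auto simp: chi_flip flip_flip)
  also have "\<dots> = (\<Sum>y\<in>?Y. - chi t y * F y)"
    by (rule sum_flip[OF assms])
  finally have "(\<Sum>y\<in>?Y. chi t y * F (flip t y)) = - (\<Sum>y\<in>?Y. chi t y * F y)"
    by (simp add: sum_negf)
  moreover have "(\<Sum>y\<in>?Y. F (y[t:=True]) - F (y[t:=False])) = (\<Sum>y\<in>?Y. chi t y * F y) - (\<Sum>y\<in>?Y. chi t y * F (flip t y))"
    by (simp add: pw sum_subtractf)
  ultimately show ?thesis by simp
qed

lemma fenchel:
  fixes q c z :: real
  assumes "0 \<le> q" "q \<le> 1" "c > 0"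
  shows "c*q*z \<le> c*q*ln c - c*q + exp z"
proof (cases "q = 0")
  case True thus ?thesis by simp
next
  case False
  hence q: "q > 0" using assms by simp
  define x where "x = c*q"
  have x: "x > 0" using q assms by (simp add: x_def)
  have "1 + (z - ln x) \<le> exp (z - ln x)" by (rule exp_ge_add_one_self)
  also have "exp (z - ln x) = exp z / x" using x by (simp add: exp_diff)
  finally have "x * (1 + (z - ln x)) \<le> exp z" using x by (simp add: field_simps)
  hence 1: "x*z \<le> x * ln x - x + exp z" by (simp add: algebra_simps)
  have "ln x = ln c + ln q" using q assms by (simp add: x_def ln_mult)
  also have "ln q \<le> 0" using q assms by simp
  finally have "x * ln x \<le> x * ln c" using x by (intro mult_left_mono) auto
  with 1 show ?thesis by (simp add: x_def)
qed

lemma mgf: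
  fixes a :: "nat \<Rightarrow> real" and lam :: real
  assumes "\<And>t. t < n \<Longrightarrow> \<bar>a t\<bar> \<le> 1/2"
  shows "(\<Sum>y\<in>{y::bool list. length y = n}. exp (lam * (\<Sum>t<n. chi t y * a t))) \<le> 2^n * exp (n * lam^2/8)"
proof -
  define f where "f t b = exp (lam * ((if b then 1 else -1) * a t))" for t b
  have "(\<Sum>y\<in>{y::bool list. length y = n}. exp (lam * (\<Sum>t<n. chi t y * a t)))
      = (\<Sum>y\<in>{y::bool list. length y = n}. \<Prod>t<n. f t (y!t))"
    by (intro sum.cong refl) (simp add: sum_distrib_left exp_sum f_def chi_def)
  also have "\<dots> = (\<Prod>t<n. f t True + f t False)" by (rule sum_lists_prod)
  also have "\<dots> \<le> (\<Prod>t<n. 2 * exp (lam^2/8))"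
  proof (rule prod_mono)
    fix t assume "t \<in> {..<n}"
    hence at: "\<bar>a t\<bar> \<le> 1/2" using assms by simp
    have "(lam * a t)^2 = lam^2 * (a t)^2" by (simp add: power_mult_distrib)
    also have "(a t)^2 \<le> (1/2)^2" using at by (metis abs_ge_zero power2_abs power_mono)
    hence "lam^2 * (a t)^2 \<le> lam^2 * (1/2)^2" by (intro mult_left_mono) auto
    finally have "(lam * a t)^2 / 2 \<le> lam^2/8" by (simp add: power2_eq_square algebra_simps)
    hence e1: "exp ((lam * a t)^2/2) \<le> exp (lam^2/8)" by simp
    have e2: "f t True + f t False \<le> 2 * exp ((lam * a t)^2/2)"
      using cosh_bound[of "lam * a t"] by (simp add: f_def)
    have "f t True + f t False \<le> 2 * exp (lam^2/8)" using e1 e2 by linarith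
    then show "0 \<le> f t True + f t False \<and> f t True + f t False \<le> 2 * exp (lam^2/8)"
      by (auto simp: f_def intro: add_nonneg_nonneg)
  qed
  also have "\<dots> = 2^n * exp (n * lam^2/8)"
    by (simp add: power_mult_distrib exp_of_nat_mult[symmetric])
  finally show ?thesis .
qed

lemma card_bool_lists: "card {y::bool list. length y = n} = 2^n"
  using card_lists_length_eq[of "UNIV::bool set" n] by simp

lemma finite_bool_lists: "finite {y::bool list. length y = n}"
  using finite_lists_length_eq[of "UNIV::bool set" n] by simp

lemma core:
  fixes q :: "bool list \<Rightarrow> 'm \<Rightarrow> real" and h :: "'m \<Rightarrow> nat \<Rightarrow> real" and S :: "'m set"
  assumes S: "finite S" and lam: "lam > 0"
    and qnn: "\<And>x m. length x = n \<Longrightarrow> m \<in> S \<Longrightarrow> 0 \<le> q x m"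
    and q1: "\<And>x. length x = n \<Longrightarrow> (\<Sum>m\<in>S. q x m) = 1"
    and h: "\<And>m t. m \<in> S \<Longrightarrow> 0 \<le> h m t \<and> h m t \<le> 1"
  shows "(\<Sum>t<n. \<Sum>y\<in>{y. length y = n}. \<Sum>m\<in>S. (q (y[t:=True]) m - q (y[t:=False]) m) * h m t)
         \<le> 2^n * (2 * ln (card S) / lam + n * lam / 4)"
proof -
  let ?Y = "{y::bool list. length y = n}"
  have finY: "finite ?Y" by (rule finite_bool_lists)
  have qle1: "q x m \<le> 1" if "length x = n" "m \<in> S" for x m
  proof -
    have "q x m \<le> (\<Sum>m\<in>S. q x m)" using that S qnn by (intro member_le_sum) auto
    thus ?thesis using q1 that by simp
  qed
  have Sne: "S \<noteq> {}" using q1[of "replicate n True"] by auto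
  hence K: "card S \<ge> 1" using S by (simp add: Suc_le_eq card_gt_0_iff)
  define Z where "Z y m = lam * (\<Sum>t<n. chi t y * (h m t - 1/2))" for y m
  have step1: "(\<Sum>y\<in>?Y. \<Sum>m\<in>S. (q (y[t:=True]) m - q (y[t:=False]) m) * h m t)
       = 2 * (\<Sum>y\<in>?Y. \<Sum>m\<in>S. chi t y * q y m * (h m t - 1/2))" if t: "t < n" for t
  proof -
    define G where "G x = (\<Sum>m\<in>S. q x m * h m t)" for x
    have "(\<Sum>y\<in>?Y. \<Sum>m\<in>S. (q (y[t:=True]) m - q (y[t:=False]) m) * h m t)
        = (\<Sum>y\<in>?Y. G (y[t:=True]) - G (y[t:=False]))"
      by (simp add: G_def sum_subtractf left_diff_distrib)
    also have "\<dots> = 2 * (\<Sum>y\<in>?Y. chi t y * G y)" by (rule upd_diff[OF t])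
    also have "(\<Sum>y\<in>?Y. chi t y * G y) = (\<Sum>y\<in>?Y. (\<Sum>m\<in>S. chi t y * q y m * (h m t - 1/2)) + chi t y / 2)"
    proof (intro sum.cong refl)
      fix y assume "y \<in> ?Y"
      hence "(\<Sum>m\<in>S. q y m) = 1" using q1 by simp
      have "G y = (\<Sum>m\<in>S. q y m * (h m t - 1/2)) + (\<Sum>m\<in>S. q y m) / 2"
        by (simp add: G_def algebra_simps sum_subtractf sum_divide_distrib)
      hence "chi t y * G y = chi t y * (\<Sum>m\<in>S. q y m * (h m t - 1/2)) + chi t y / 2"
        using \<open>(\<Sum>m\<in>S. q y m) = 1\<close> by (simp add: algebra_simps)
      thus "chi t y * G y = (\<Sum>m\<in>S. chi t y * q y m * (h m t - 1/2)) + chi t y / 2"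
        by (simp add: sum_distrib_left mult.assoc)
    qed
    also have "\<dots> = (\<Sum>y\<in>?Y. \<Sum>m\<in>S. chi t y * q y m * (h m t - 1/2)) + (\<Sum>y\<in>?Y. chi t y) / 2"
      by (simp add: sum.distrib sum_divide_distrib)
    also have "(\<Sum>y\<in>?Y. chi t y) = 0" by (rule chi_sum0[OF t])
    finally show ?thesis by simp
  qed
  have "(\<Sum>t<n. \<Sum>y\<in>?Y. \<Sum>m\<in>S. (q (y[t:=True]) m - q (y[t:=False]) m) * h m t)
      = (\<Sum>t<n. 2 * (\<Sum>y\<in>?Y. \<Sum>m\<in>S. chi t y * q y m * (h m t - 1/2)))"
    using step1 by (intro sum.cong) auto
  also have "\<dots> = (2/lam) * (\<Sum>y\<in>?Y. \<Sum>m\<in>S. q y m * Z y m)"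
    using lam
    by (simp add: Z_def sum_distrib_left sum_distrib_right mult_ac sum.swap[of _ "{..<n}"])
      (intro sum.cong refl, simp add: algebra_simps)
  finally have L: "(\<Sum>t<n. \<Sum>y\<in>?Y. \<Sum>m\<in>S. (q (y[t:=True]) m - q (y[t:=False]) m) * h m t)
      = (2/lam) * (\<Sum>y\<in>?Y. \<Sum>m\<in>S. q y m * Z y m)" .
  define c where "c = card S * exp (n * lam^2/8)"
  have c: "c > 0" using K by (simp add: c_def)
  have F: "c * (q y m * Z y m) \<le> c*q y m*ln c - c*q y m + exp (Z y m)" if "y \<in> ?Y" "m \<in> S" for y m
    using fenchel[of "q y m" c "Z y m"] qnn[of y m] qle1[of y m] that c by (simp add: mult.assoc)
  have "c * (\<Sum>y\<in>?Y. \<Sum>m\<in>S. q y m * Z y m) = (\<Sum>y\<in>?Y. \<Sum>m\<in>S. c * (q y m * Z y m))"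
    by (simp add: sum_distrib_left)
  also have "\<dots> \<le> (\<Sum>y\<in>?Y. \<Sum>m\<in>S. c*q y m*ln c - c*q y m + exp (Z y m))"
    using F by (intro sum_mono) auto
  also have "\<dots> = (c * ln c - c) * (\<Sum>y\<in>?Y. \<Sum>m\<in>S. q y m) + (\<Sum>m\<in>S. \<Sum>y\<in>?Y. exp (Z y m))"
    by (simp add: sum.distrib sum_subtractf sum_distrib_left algebra_simps sum.swap[of _ S])
  also have "(\<Sum>y\<in>?Y. \<Sum>m\<in>S. q y m) = 2^n"
    using q1 card_bool_lists[of n] by simp
  also have "(\<Sum>m\<in>S. \<Sum>y\<in>?Y. exp (Z y m)) \<le> (\<Sum>m\<in>S. 2^n * exp (n * lam^2/8))"
  proof (intro sum_mono)
    fix m assume m: "m \<in> S"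
    show "(\<Sum>y\<in>?Y. exp (Z y m)) \<le> 2^n * exp (n * lam^2/8)"
      unfolding Z_def
    proof (rule mgf)
      fix t assume "t < n"
      have "0 \<le> h m t" "h m t \<le> 1" using h[OF m] by auto
      thus "\<bar>h m t - 1/2\<bar> \<le> 1/2" by (auto simp: abs_if)
    qed
  qed
  also have "(\<Sum>m\<in>S. 2^n * exp (n * lam^2/8)) = 2^n * c"
    by (simp add: c_def)
  finally have "c * (\<Sum>y\<in>?Y. \<Sum>m\<in>S. q y m * Z y m) \<le> c * (2^n * ln c)"
    by (simp add: algebra_simps)
  hence "(\<Sum>y\<in>?Y. \<Sum>m\<in>S. q y m * Z y m) \<le> 2^n * ln c"
    using c by simp
  also have "ln c = ln (card S) + n * lam^2/8"
    using K by (simp add: c_def ln_mult)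
  finally have "(2/lam) * (\<Sum>y\<in>?Y. \<Sum>m\<in>S. q y m * Z y m) \<le> (2/lam) * (2^n * (ln (card S) + n * lam^2/8))"
    using lam by (intro mult_left_mono) auto
  also have "\<dots> = 2^n * (2 * ln (card S) / lam + n * lam / 4)"
    using lam by (simp add: field_simps power2_eq_square)
  finally show ?thesis using L by simp
qed


lemma integrable_pmf_fun: "integrable (measure_pmf M) (\<lambda>a. pmf (f a) x)"
  by (intro measure_pmf.integrable_const_bound[where B=1]) (auto intro!: AE_pmfI simp: pmf_le_1)

lemma pmf_bind_ge:
  assumes "\<And>a. a \<in> set_pmf M \<Longrightarrow> c \<le> pmf (f a) x"
  shows "c \<le> pmf (bind_pmf M f) x"
  unfolding pmf_bind
  by (rule measure_pmf.integral_ge_const[OF integrable_pmf_fun]) (auto intro!: AE_pmfI assms)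

lemma pmf_bind_diff_le:
  assumes "\<And>a. a \<in> set_pmf M \<Longrightarrow> pmf (f a) x - pmf (g a) x \<le> d"
  shows "pmf (bind_pmf M f) x - pmf (bind_pmf M g) x \<le> d"
proof -
  have "pmf (bind_pmf M f) x - pmf (bind_pmf M g) x = (\<integral>a. pmf (f a) x - pmf (g a) x \<partial>measure_pmf M)"
    unfolding pmf_bind by (rule Bochner_Integration.integral_diff[symmetric, OF integrable_pmf_fun integrable_pmf_fun])
  also have "\<dots> \<le> d"
    by (rule measure_pmf.integral_le_const)
       (auto intro!: AE_pmfI assms integrable_diff integrable_pmf_fun)
  finally show ?thesis .
qed

definition Upmf :: "nat \<Rightarrow> bool list pmf" where "Upmf n = pmf_of_set {y. length y = n}"
definition Tpmf :: "nat \<Rightarrow> nat pmf" where "Tpmf n = pmf_of_set {..<n}"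

lemma set_Upmf[simp]: "set_pmf (Upmf n) = {y. length y = n}"
  unfolding Upmf_def by (rule set_pmf_of_set) (auto simp: finite_bool_lists intro: exI[of _ "replicate n True"])

lemma set_Tpmf[simp]: "n \<ge> 1 \<Longrightarrow> set_pmf (Tpmf n) = {..<n}"
  unfolding Tpmf_def by (rule set_pmf_of_set) (auto simp: lessThan_empty_iff)

definition step :: "chain_protocol \<Rightarrow> nat \<Rightarrow> bool list \<Rightarrow> nat \<Rightarrow> bool list \<Rightarrow> bool list pmf" where
  "step P k x s m = (if k = 1 then chain_first P x else chain_mid P k x s m)"

lemma step_mid: "k \<noteq> 1 \<Longrightarrow> step P k x s = chain_mid P k x s"
  by (rule ext) (simp add: step_def)

lemma chain_msg_Suc:
  "chain_msg P xs ts (Suc k) = bind_pmf (chain_msg P xs ts k) (step P (Suc k) (xs (Suc k)) (ts (Suc k)))"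
  by (cases k) (auto simp: step_def bind_return_pmf step_mid)

lemma chain_msg_local:
  "(\<And>i. i \<le> k \<Longrightarrow> xs i = xs' i \<and> ts i = ts' i) \<Longrightarrow> chain_msg P xs ts k = chain_msg P xs' ts' k"
proof (induction k)
  case 0 thus ?case by simp
next
  case (Suc k) thus ?case by (simp add: chain_msg_Suc)
qed

fun fin :: "chain_protocol \<Rightarrow> nat \<Rightarrow> (nat \<Rightarrow> bool) \<Rightarrow> nat \<Rightarrow> nat \<Rightarrow> bool list \<times> nat \<Rightarrow> bool pmf" where
  "fin P n \<beta> j 0 st = chain_last P (snd st) (fst st)"
| "fin P n \<beta> j (Suc r) st = bind_pmf (Tpmf n) (\<lambda>t. bind_pmf (Upmf n) (\<lambda>y.
      bind_pmf (step P j (y[t := \<beta> j]) (snd st) (fst st)) (\<lambda>m'. fin P n \<beta> (Suc j) r (m', t))))"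

lemma fin_local: "(\<And>i. i \<ge> j \<Longrightarrow> \<beta> i = \<beta>' i) \<Longrightarrow> fin P n \<beta> j r = fin P n \<beta>' j r"
proof (induction r arbitrary: j)
  case 0 thus ?case by (simp add: fun_eq_iff)
next
  case (Suc r)
  have "fin P n \<beta> (Suc j) r = fin P n \<beta>' (Suc j) r" using Suc by auto
  moreover have "\<beta> j = \<beta>' j" using Suc by auto
  ultimately show ?case by (simp add: fun_eq_iff)
qed

lemma rewriteR:
  assumes "j \<ge> 1"
  shows "bind_pmf (chain_msg P xs ts (j-1)) (\<lambda>m. fin P n \<beta> j (Suc r) (m, ts j))
       = bind_pmf (Tpmf n) (\<lambda>t. bind_pmf (Upmf n) (\<lambda>y.
           bind_pmf (chain_msg P (xs(j := y[t:=\<beta> j])) (ts(Suc j := t)) j) (\<lambda>m. fin P n \<beta> (Suc j) r (m, t))))"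
proof -
  obtain j0 where j: "j = Suc j0" using assms by (cases j) auto
  let ?M = "chain_msg P xs ts j0"
  have msg: "chain_msg P (xs(j := y[t:=\<beta> j])) (ts(Suc j := t)) j
      = bind_pmf ?M (step P j (y[t:=\<beta> j]) (ts j))" for t y
    unfolding j chain_msg_Suc
    by (subst chain_msg_local[of j0 _ xs _ ts]) auto
  have "bind_pmf (chain_msg P xs ts (j-1)) (\<lambda>m. fin P n \<beta> j (Suc r) (m, ts j))
      = bind_pmf ?M (\<lambda>m. bind_pmf (Tpmf n) (\<lambda>t. bind_pmf (Upmf n) (\<lambda>y.
           bind_pmf (step P j (y[t := \<beta> j]) (ts j) m) (\<lambda>m'. fin P n \<beta> (Suc j) r (m', t)))))"
    by (simp add: j)
  also have "\<dots> = bind_pmf (Tpmf n) (\<lambda>t. bind_pmf ?M (\<lambda>m. bind_pmf (Upmf n) (\<lambda>y.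
           bind_pmf (step P j (y[t := \<beta> j]) (ts j) m) (\<lambda>m'. fin P n \<beta> (Suc j) r (m', t)))))"
    by (rule bind_commute_pmf)
  also have "\<dots> = bind_pmf (Tpmf n) (\<lambda>t. bind_pmf (Upmf n) (\<lambda>y. bind_pmf ?M (\<lambda>m.
           bind_pmf (step P j (y[t := \<beta> j]) (ts j) m) (\<lambda>m'. fin P n \<beta> (Suc j) r (m', t)))))"
    by (subst bind_commute_pmf) (rule refl)
  also have "\<dots> = bind_pmf (Tpmf n) (\<lambda>t. bind_pmf (Upmf n) (\<lambda>y.
           bind_pmf (chain_msg P (xs(j := y[t:=\<beta> j])) (ts(Suc j := t)) j) (\<lambda>m. fin P n \<beta> (Suc j) r (m, t))))"
    by (simp add: msg bind_assoc_pmf)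
  finally show ?thesis .
qed

lemma pmf_bind_T:
  assumes "n \<ge> 1"
  shows "pmf (bind_pmf (Tpmf n) f) x = (\<Sum>t<n. pmf (f t) x) / n"
  unfolding pmf_bind Tpmf_def using assms
  by (subst integral_pmf_of_set) (auto simp: lessThan_empty_iff)

lemma pmf_bind_U:
  "pmf (bind_pmf (Upmf n) f) x = (\<Sum>y\<in>{y. length y = n}. pmf (f y) x) / 2^n"
  unfolding pmf_bind Upmf_def
  by (subst integral_pmf_of_set) (auto simp: finite_bool_lists card_bool_lists intro: exI[of _ "replicate n True"])

lemma pmf_bind_fin:
  assumes "finite S" "set_pmf M \<subseteq> S"
  shows "pmf (bind_pmf M f) x = (\<Sum>m\<in>S. pmf (f m) x * pmf M m)"
  unfolding pmf_bind using assms
  by (subst integral_measure_pmf_real[where A=S]) auto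

lemma index_pmf:
  fixes g :: "bool list \<Rightarrow> 'm pmf" and F :: "'m \<times> nat \<Rightarrow> bool pmf"
  assumes n: "n \<ge> 1" and S: "finite S" and lam: "lam > 0"
    and g: "\<And>x. length x = n \<Longrightarrow> set_pmf (g x) \<subseteq> S"
  shows "pmf (bind_pmf (Tpmf n) (\<lambda>t. bind_pmf (Upmf n) (\<lambda>y. bind_pmf (g (y[t:=True])) (\<lambda>m'. F (m', t))))) True
       - pmf (bind_pmf (Tpmf n) (\<lambda>t. bind_pmf (Upmf n) (\<lambda>y. bind_pmf (g (y[t:=False])) (\<lambda>m'. F (m', t))))) True
       \<le> 2 * ln (card S) / (n * lam) + lam / 4"
proof -
  let ?Y = "{y::bool list. length y = n}"
  define h where "h m t = pmf (F (m, t)) True" for m t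
  define q where "q x m = pmf (g x) m" for x m
  have eval: "pmf (bind_pmf (Tpmf n) (\<lambda>t. bind_pmf (Upmf n) (\<lambda>y. bind_pmf (g (y[t:=b])) (\<lambda>m'. F (m', t))))) True
      = (\<Sum>t<n. \<Sum>y\<in>?Y. \<Sum>m\<in>S. q (y[t:=b]) m * h m t) / (n * 2^n)" for b
  proof -
    have "pmf (bind_pmf (Tpmf n) (\<lambda>t. bind_pmf (Upmf n) (\<lambda>y. bind_pmf (g (y[t:=b])) (\<lambda>m'. F (m', t))))) True
      = (\<Sum>t<n. (\<Sum>y\<in>?Y. \<Sum>m\<in>S. h m t * q (y[t:=b]) m) / 2^n) / n"
      using n g S by (simp add: pmf_bind_T pmf_bind_U pmf_bind_fin h_def q_def)
    also have "\<dots> = (\<Sum>t<n. \<Sum>y\<in>?Y. \<Sum>m\<in>S. q (y[t:=b]) m * h m t) / (n * 2^n)"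
      by (simp add: sum_divide_distrib[symmetric] mult_ac)
    finally show ?thesis .
  qed
  have c: "(\<Sum>t<n. \<Sum>y\<in>?Y. \<Sum>m\<in>S. (q (y[t:=True]) m - q (y[t:=False]) m) * h m t)
         \<le> 2^n * (2 * ln (card S) / lam + n * lam / 4)"
  proof (rule core[OF S lam])
    fix x m show "0 \<le> q x m" by (simp add: q_def)
  next
    fix x :: "bool list" assume "length x = n"
    thus "(\<Sum>m\<in>S. q x m) = 1" unfolding q_def by (intro sum_pmf_eq_1 S g)
  next
    fix m t show "0 \<le> h m t \<and> h m t \<le> 1" by (simp add: h_def pmf_le_1)
  qed
  have "(\<Sum>t<n. \<Sum>y\<in>?Y. \<Sum>m\<in>S. q (y[t:=True]) m * h m t) / (n * 2^n)
      - (\<Sum>t<n. \<Sum>y\<in>?Y. \<Sum>m\<in>S. q (y[t:=False]) m * h m t) / (n * 2^n)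
      = (\<Sum>t<n. \<Sum>y\<in>?Y. \<Sum>m\<in>S. (q (y[t:=True]) m - q (y[t:=False]) m) * h m t) / (n * 2^n)"
    by (simp add: diff_divide_distrib[symmetric] sum_subtractf[symmetric] left_diff_distrib)
  also have "\<dots> \<le> 2^n * (2 * ln (card S) / lam + n * lam / 4) / (n * 2^n)"
    using c n by (intro divide_right_mono) auto
  also have "\<dots> = 2 * ln (card S) / (n * lam) + lam / 4"
    using n lam by (simp add: field_simps)
  finally show ?thesis by (simp only: eval)
qed

lemma endpoint:
  assumes succ: "chain_success P p n (2/3)" and n: "n \<ge> 1"
  shows "1 \<le> j \<Longrightarrow> j + r = p
    \<Longrightarrow> (\<And>i. 1 \<le> i \<Longrightarrow> i < j \<Longrightarrow> length (xs i) = n \<and> xs i ! ts (Suc i) = b)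
    \<Longrightarrow> (\<And>i. 2 \<le> i \<Longrightarrow> i \<le> j \<Longrightarrow> ts i < n)
    \<Longrightarrow> (\<And>i. j \<le> i \<Longrightarrow> i < p \<Longrightarrow> \<beta> i = b)
    \<Longrightarrow> 2/3 \<le> pmf (bind_pmf (chain_msg P xs ts (j-1)) (\<lambda>m. fin P n \<beta> j r (m, ts j))) b"
proof (induction r arbitrary: j xs ts)
  case 0
  hence jp: "j = p" by simp
  have inp: "chain_input p n xs ts" unfolding chain_input_def using 0 jp by auto
  have cas: "chain_case p xs ts b" unfolding chain_case_def using 0 jp by auto
  have "2/3 \<le> pmf (chain_output P p xs ts) b"
    using succ inp cas unfolding chain_success_def by blast
  thus ?case using jp by (simp add: chain_output_def)
next
  case (Suc r)
  show ?case
    unfolding rewriteR[OF Suc.prems(1)]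
  proof (rule pmf_bind_ge, rule pmf_bind_ge)
    fix t y assume t: "t \<in> set_pmf (Tpmf n)" and y: "y \<in> set_pmf (Upmf n)"
    hence t: "t < n" and y: "length y = n" using n by auto
    let ?xs = "xs(j := y[t:=\<beta> j])" and ?ts = "ts(Suc j := t)"
    have bj: "\<beta> j = b" using Suc.prems by simp
    have "2/3 \<le> pmf (bind_pmf (chain_msg P ?xs ?ts (Suc j - 1)) (\<lambda>m. fin P n \<beta> (Suc j) r (m, ?ts (Suc j)))) b"
    proof (rule Suc.IH)
      show "1 \<le> Suc j" by simp
      show "Suc j + r = p" using Suc.prems by simp
    next
      fix i assume "1 \<le> i" "i < Suc j"
      thus "length (?xs i) = n \<and> ?xs i ! ?ts (Suc i) = b"
        using Suc.prems(3)[of i] y t bj by (cases "i = j") auto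
    next
      fix i assume "2 \<le> i" "i \<le> Suc j"
      thus "?ts i < n" using Suc.prems(4)[of i] t by (cases "i = Suc j") auto
    next
      fix i assume "Suc j \<le> i" "i < p"
      thus "\<beta> i = b" using Suc.prems(5) by simp
    qed
    thus "2/3 \<le> pmf (bind_pmf (chain_msg P ?xs ?ts j) (\<lambda>m. fin P n \<beta> (Suc j) r (m, t))) b"
      by simp
  qed
qed

lemma hybrid:
  assumes cost: "chain_cost_le P p n C" and n: "n \<ge> 1" and lam: "lam > 0"
    and k: "1 \<le> k" "k < p"
    and agree: "\<And>i. i \<noteq> k \<Longrightarrow> \<beta>1 i = \<beta>2 i" and b1: "\<beta>1 k = True" and b2: "\<beta>2 k = False"
  shows "1 \<le> j \<Longrightarrow> j \<le> k \<Longrightarrow> j + r = p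
    \<Longrightarrow> (\<And>i. 1 \<le> i \<Longrightarrow> i < j \<Longrightarrow> length (xs i) = n)
    \<Longrightarrow> (\<And>i. 2 \<le> i \<Longrightarrow> i \<le> j \<Longrightarrow> ts i < n)
    \<Longrightarrow> pmf (bind_pmf (chain_msg P xs ts (j-1)) (\<lambda>m. fin P n \<beta>1 j r (m, ts j))) True
      - pmf (bind_pmf (chain_msg P xs ts (j-1)) (\<lambda>m. fin P n \<beta>2 j r (m, ts j))) True
      \<le> 2 * ln (card {m::bool list. length m \<le> C}) / (n * lam) + lam / 4"
proof (induction r arbitrary: j xs ts)
  case 0
  thus ?case using k by simp
next
  case (Suc r)
  show ?case
  proof (cases "j < k")
    case True
    have bj: "\<beta>1 j = \<beta>2 j" using agree True by simp
    show ?thesis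
      unfolding rewriteR[OF Suc.prems(1)] bj
    proof (rule pmf_bind_diff_le, rule pmf_bind_diff_le)
      fix t y assume t: "t \<in> set_pmf (Tpmf n)" and y: "y \<in> set_pmf (Upmf n)"
      hence t: "t < n" and y: "length y = n" using n by auto
      let ?xs = "xs(j := y[t:=\<beta>2 j])" and ?ts = "ts(Suc j := t)"
      have "pmf (bind_pmf (chain_msg P ?xs ?ts (Suc j - 1)) (\<lambda>m. fin P n \<beta>1 (Suc j) r (m, ?ts (Suc j)))) True
          - pmf (bind_pmf (chain_msg P ?xs ?ts (Suc j - 1)) (\<lambda>m. fin P n \<beta>2 (Suc j) r (m, ?ts (Suc j)))) True
          \<le> 2 * ln (card {m::bool list. length m \<le> C}) / (n * lam) + lam / 4"
      proof (rule Suc.IH)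
        show "1 \<le> Suc j" "Suc j \<le> k" using True by auto
        show "Suc j + r = p" using Suc.prems by simp
      next
        fix i assume "1 \<le> i" "i < Suc j"
        thus "length (?xs i) = n" using Suc.prems(4)[of i] y by (cases "i = j") auto
      next
        fix i assume "2 \<le> i" "i \<le> Suc j"
        thus "?ts i < n" using Suc.prems(5)[of i] t by (cases "i = Suc j") auto
      qed
      thus "pmf (bind_pmf (chain_msg P ?xs ?ts j) (\<lambda>m. fin P n \<beta>1 (Suc j) r (m, t))) True
          - pmf (bind_pmf (chain_msg P ?xs ?ts j) (\<lambda>m. fin P n \<beta>2 (Suc j) r (m, t))) True
          \<le> 2 * ln (card {m::bool list. length m \<le> C}) / (n * lam) + lam / 4"
        by simp
    qed
  next
    case False
    hence jk: "j = k" using Suc.prems by simp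
    have fineq: "fin P n \<beta>1 (Suc k) r = fin P n \<beta>2 (Suc k) r"
      by (rule fin_local) (use agree in auto)
    let ?S = "{m::bool list. length m \<le> C}"
    have finS: "finite ?S" using finite_lists_length_le[of "UNIV::bool set" C] by simp
    obtain k0 where k0: "k = Suc k0" using k by (cases k) auto
    show ?thesis
      unfolding jk
    proof (rule pmf_bind_diff_le)
      fix m assume m: "m \<in> set_pmf (chain_msg P xs ts (k-1))"
      have supp: "set_pmf (step P k x (ts k) m) \<subseteq> ?S" if x: "length x = n" for x
      proof
        fix m' assume m': "m' \<in> set_pmf (step P k x (ts k) m)"
        define xs'' where "xs'' i = (if i = k then x else if i < k then xs i else replicate n False)" for i
        define ts'' where "ts'' i = (if i \<le> k then ts i else 0)" for i
        have inp: "chain_input p n xs'' ts''"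
          unfolding chain_input_def xs''_def ts''_def
          using Suc.prems(4,5) jk x n by auto
        have "chain_msg P xs'' ts'' k = bind_pmf (chain_msg P xs ts (k-1)) (step P k x (ts k))"
          unfolding k0 chain_msg_Suc
          by (subst chain_msg_local[of k0 _ xs _ ts]) (auto simp: xs''_def ts''_def k0)
        hence "m' \<in> set_pmf (chain_msg P xs'' ts'' k)" using m m' by auto
        moreover have "k \<in> {1..p-1}" using k by auto
        ultimately show "m' \<in> ?S" using cost inp unfolding chain_cost_le_def by blast
      qed
      show "pmf (fin P n \<beta>1 k (Suc r) (m, ts k)) True - pmf (fin P n \<beta>2 k (Suc r) (m, ts k)) True
          \<le> 2 * ln (card ?S) / (n * lam) + lam / 4"
        using index_pmf[OF n finS lam, of "\<lambda>x. step P k x (ts k) m" "fin P n \<beta>2 (Suc k) r"] supp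
        by (simp add: b1 b2 fineq)
    qed
  qed
qed

lemma sum_pow2_le_pow4: "(\<Sum>l\<le>C. (2::nat)^l) \<le> 4^C"
proof (induction C)
  case 0 thus ?case by simp
next
  case (Suc C)
  have "(2::nat)^Suc C \<le> 3 * 4^C"
  proof -
    have "(2::nat)^C \<le> 4^C" by (intro power_mono) auto
    thus ?thesis by simp
  qed
  thus ?case using Suc by simp
qed

lemma card_short_lists: "card {m::bool list. length m \<le> C} \<le> 4^C"
proof -
  have eq: "{m::bool list. length m \<le> C} = (\<Union>l\<in>{..C}. {m. length m = l})" by auto
  have "card {m::bool list. length m \<le> C} \<le> (\<Sum>l\<le>C. card {m::bool list. length m = l})"
    unfolding eq by (rule card_UN_le) simp
  also have "\<dots> = (\<Sum>l\<le>C. 2^l)" by (simp add: card_bool_lists)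
  also have "\<dots> \<le> 4^C" by (rule sum_pow2_le_pow4)
  finally show ?thesis .
qed

lemma ln_card_short_lists: "ln (card {m::bool list. length m \<le> C}) \<le> 2 * C"
proof -
  let ?K = "card {m::bool list. length m \<le> C}"
  have fin: "finite {m::bool list. length m \<le> C}"
    using finite_lists_length_le[of "UNIV::bool set" C] by simp
  have "[] \<in> {m::bool list. length m \<le> C}" by simp
  hence "?K \<noteq> 0" using fin by (metis card_0_eq empty_iff)
  hence K1: "?K \<ge> 1" by simp
  have "real ?K \<le> real (4^C)" using card_short_lists[of C] by (simp only: of_nat_le_iff)
  hence "real ?K \<le> 4^C" by simp
  hence "ln (real ?K) \<le> ln (4^C)" using K1 by (intro ln_mono) auto
  also have "ln ((4::real)^C) = C * ln 4" by (simp add: ln_realpow)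
  also have "ln (4::real) = 2 * ln 2"
    using ln_realpow[of 2 2] by simp
  also have "real C * (2 * ln 2) \<le> real C * 2"
    using ln_2_less_1 by (intro mult_left_mono) auto
  finally show ?thesis by (simp add: mult.commute)
qed

theorem theorem11:
  fixes P :: chain_protocol and n p C :: nat
  assumes "n \<ge> 1" and "p \<ge> 2"
    and "chain_success P p n (2/3)"
    and "chain_cost_le P p n C"
  shows "real C \<ge> real n / (36 * real p ^ 2)"
proof -
  note n = assms(1) and p = assms(2) and succ = assms(3) and cost = assms(4)
  define S where "S = {m::bool list. length m \<le> C}"
  define lam :: real where "lam = 2 / (3 * real p)"
  have lam: "lam > 0" using p by (simp add: lam_def)
  define \<delta> where "\<delta> = 2 * ln (card S) / (n * lam) + lam / 4"
  define xs0 :: "nat \<Rightarrow> bool list" where "xs0 = (\<lambda>_. [])"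
  define ts0 :: "nat \<Rightarrow> nat" where "ts0 = (\<lambda>_. 0)"
  define Ob where "Ob j = pmf (bind_pmf (chain_msg P xs0 ts0 (1-1)) (\<lambda>m. fin P n (\<lambda>i. i \<le> j) 1 (p-1) (m, ts0 1))) True" for j
  have top: "2/3 \<le> Ob (p-1)"
    unfolding Ob_def
    by (rule endpoint[OF succ n]) (use p in auto)
  have "2/3 \<le> pmf (bind_pmf (chain_msg P xs0 ts0 (1-1)) (\<lambda>m. fin P n (\<lambda>i. i \<le> 0) 1 (p-1) (m, ts0 1))) False"
    by (rule endpoint[OF succ n]) (use p in auto)
  hence bot: "Ob 0 \<le> 1/3" unfolding Ob_def by (simp add: pmf_False_conv_True)
  have stepk: "Ob k - Ob (k-1) \<le> \<delta>" if k: "1 \<le> k" "k < p" for k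
    unfolding Ob_def \<delta>_def S_def
    by (rule hybrid[OF cost n lam k, where ?\<beta>1.0="\<lambda>i. i \<le> k" and ?\<beta>2.0="\<lambda>i. i \<le> k-1"]) (use k p in auto)
  have tele: "j \<le> p - 1 \<Longrightarrow> Ob j - Ob 0 \<le> j * \<delta>" for j
  proof (induction j)
    case 0 thus ?case by simp
  next
    case (Suc j)
    have "Ob (Suc j) - Ob j \<le> \<delta>" using stepk[of "Suc j"] Suc.prems by simp
    thus ?case using Suc by (simp add: algebra_simps)
  qed
  have main: "1/3 \<le> real (p-1) * \<delta>" using tele[of "p-1"] top bot by simp
  show ?thesis
  proof (rule ccontr)
    assume "\<not> ?thesis"
    hence lt: "real C < real n / (36 * real p ^ 2)" by simp
    have q: "real p \<ge> 2" using p by simp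
    have N: "real n > 0" using n by simp
    have lnK: "ln (card S) \<le> 2 * real C" unfolding S_def by (rule ln_card_short_lists)
    have h1: "2 * ln (card S) / (n * lam) = 3 * real p * ln (card S) / n"
      using q N by (simp add: lam_def field_simps)
    have h2: "3 * real p * ln (card S) / n \<le> 6 * real p * real C / n"
      using lnK q N by (intro divide_right_mono) auto
    have "36 * real p ^ 2 * real C < real n" using lt q by (simp add: field_simps)
    hence h3: "6 * real p * real C / n < 1 / (6 * real p)"
      using q N by (simp add: field_simps power2_eq_square)
    have "\<delta> < 1 / (6 * real p) + 1 / (6 * real p)"
      using h1 h2 h3 q unfolding \<delta>_def by (simp add: lam_def)
    hence d: "\<delta> < 1 / (3 * real p)" by simp
    have pm: "real (p-1) = real p - 1" using p by simp
    have "real (p-1) * \<delta> < (real p - 1) * (1 / (3 * real p))"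
      unfolding pm using d q by (intro mult_strict_left_mono) auto
    also have "\<dots> < 1/3" using q by (simp add: field_simps)
    finally show False using main pm by simp
  qed
qed

end
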